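(* Let $m\ge4$ and let $g(x_1,x_2,x_3)=a_1(cx_1+\alpha_1)^2+a_2(cx_2+\alpha_2)^2+a_3(cx_3+\alpha_3)^2$ be a tight regular complete quadratic polynomial where $a_1,a_2,a_3$ are positive integers with $\gcd(a_1,a_2,a_3)=1$ and $a_1\le a_2\le a_3$, the lattice $\langle a_1,a_2,a_3\rangle$ is $p$-stable for every prime $p\nmid c$, $\alpha_i\in\mathbb{Z}$ with $0<\alpha_i<c/2$ for $i=1,2,3$, and $\gcd(c,\alpha_1\alpha_2\alpha_3)=1$. For $n\in\mathbb{Z}_{\ge0}$ let $\beta(n)=\delta cn+a_1\alpha_1^2+a_2\alpha_2^2+a_3\alpha_3^2$. Then: (i) $\min(g)=a_1\alpha_1^2+a_2\alpha_2^2+a_3\alpha_3^2$; (ii) for every prime divisor $p$ of $c$ and every $n\in\mathbb{Z}_{\ge0}$, $\beta(n)$ is represented by $g$ over $\mathbb{Z}_p$; (iii) for every prime $p$ not dividing $c$ and every $n\in\mathbb{Z}_{\ge0}$, $\beta(n)$ is represented by $g$ over $\mathbb{Z}_p$ if and only if $\beta(n)$ is represented by the $\mathbb{Z}$-lattice $\langle a_1,a_2,a_3\rangle$ over $\mathbb{Z}_p$.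
   Context: Define $\delta=4$ if $m$ is odd, $\delta=2$ if $m\equiv2\pmod4$, $\delta=1$ if $m\equiv0\pmod4$, and $c=\delta\frac{m-2}{2}$. An integer $n$ is represented by $g$ over $R\in\{\mathbb{Z},\mathbb{Z}_p,\mathbb{R}\}$ if $g(\mathbf{x})=n$ for some $\mathbf{x}\in R^3$; locally represented means represented over every $\mathbb{Z}_p$ and over $\mathbb{R}$. $\min(g)=\min\{g(\mathbf{x}):\mathbf{x}\in\mathbb{Z}^3\}$; $g$ is tight regular if it represents over $\mathbb{Z}$ every locally represented integer $\ge\min(g)$. $\langle a_1,a_2,a_3\rangle$ is the lattice with form $a_1x_1^2+a_2x_2^2+a_3x_3^2$. For an odd prime $p$ with nonsquare unit $\Delta_p$, a diagonal ternary lattice $K$ is $p$-stable if $\langle1,-1\rangle$ is represented by $K\otimes\mathbb{Z}_p$ or $K\otimes\mathbb{Z}_p\cong\langle1,-\Delta_p\rangle\perp\langle p\epsilon\rangle$ with $\epsilon\in\mathbb{Z}_p^\times$; $K$ is $2$-stable if $K\otimes\mathbb{Z}_2$ is unimodular or $\langle1,3\rangle$ or $\langle1,7\rangle$ is represented by $K\otimes\mathbb{Z}_2$. *)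

theory Defs
  imports "HOL-Number_Theory.Number_Theory" Complex_Main
begin

definition delta :: "int \<Rightarrow> int" where
  "delta m = (if odd m then 4 else if m mod 4 = 2 then 2 else 1)"

definition cpar :: "int \<Rightarrow> int" where
  "cpar m = delta m * (m - 2) div 2"

definition gpol :: "int \<Rightarrow> int \<Rightarrow> int \<Rightarrow> int \<Rightarrow> int \<Rightarrow> int \<Rightarrow> int \<Rightarrow>
    'a::comm_ring_1 \<Rightarrow> 'a \<Rightarrow> 'a \<Rightarrow> 'a" where
  "gpol a1 a2 a3 c al1 al2 al3 x1 x2 x3 =
     of_int a1 * (of_int c * x1 + of_int al1)^2
   + of_int a2 * (of_int c * x2 + of_int al2)^2
   + of_int a3 * (of_int c * x3 + of_int al3)^2"

text \<open>An element of Z_p is a sequence x with x (k+1) = x k (mod p^k); x k represents the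
  residue of the p-adic integer modulo p^k. Ring operations (and polynomials with integer
  coefficients) are computed levelwise.\<close>

type_synonym zp = "nat \<Rightarrow> int"

definition zp_mem :: "int \<Rightarrow> zp \<Rightarrow> bool" where
  "zp_mem p x \<longleftrightarrow> (\<forall>k. [x (Suc k) = x k] (mod p ^ k))"

definition zp_eq :: "int \<Rightarrow> zp \<Rightarrow> zp \<Rightarrow> bool" where
  "zp_eq p x y \<longleftrightarrow> (\<forall>k. [x k = y k] (mod p ^ k))"

definition zp_unit :: "int \<Rightarrow> zp \<Rightarrow> bool" where
  "zp_unit p x \<longleftrightarrow> zp_mem p x \<and> (\<exists>y. zp_mem p y \<and> zp_eq p (\<lambda>k. x k * y k) (\<lambda>_. 1))"

definition zp_square :: "int \<Rightarrow> zp \<Rightarrow> bool" where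
  "zp_square p x \<longleftrightarrow> (\<exists>y. zp_mem p y \<and> zp_eq p (\<lambda>k. y k ^ 2) x)"

type_synonym zp3 = "zp \<times> zp \<times> zp"

definition zp3_mem :: "int \<Rightarrow> zp3 \<Rightarrow> bool" where
  "zp3_mem p v \<longleftrightarrow> (case v of (x1, x2, x3) \<Rightarrow> zp_mem p x1 \<and> zp_mem p x2 \<and> zp_mem p x3)"

definition rep_Z_g :: "int \<Rightarrow> int \<Rightarrow> int \<Rightarrow> int \<Rightarrow> int \<Rightarrow> int \<Rightarrow> int \<Rightarrow> int \<Rightarrow> bool" where
  "rep_Z_g a1 a2 a3 c al1 al2 al3 n \<longleftrightarrow>
     (\<exists>x1 x2 x3 :: int. gpol a1 a2 a3 c al1 al2 al3 x1 x2 x3 = n)"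

definition rep_Zp_g :: "int \<Rightarrow> int \<Rightarrow> int \<Rightarrow> int \<Rightarrow> int \<Rightarrow> int \<Rightarrow> int \<Rightarrow> int \<Rightarrow> int \<Rightarrow> bool" where
  "rep_Zp_g p a1 a2 a3 c al1 al2 al3 n \<longleftrightarrow>
     (\<exists>x1 x2 x3. zp_mem p x1 \<and> zp_mem p x2 \<and> zp_mem p x3 \<and>
        zp_eq p (\<lambda>k. gpol a1 a2 a3 c al1 al2 al3 (x1 k) (x2 k) (x3 k)) (\<lambda>_. n))"

definition rep_R_g :: "int \<Rightarrow> int \<Rightarrow> int \<Rightarrow> int \<Rightarrow> int \<Rightarrow> int \<Rightarrow> int \<Rightarrow> int \<Rightarrow> bool" where
  "rep_R_g a1 a2 a3 c al1 al2 al3 n \<longleftrightarrow>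
     (\<exists>x1 x2 x3 :: real. gpol a1 a2 a3 c al1 al2 al3 x1 x2 x3 = real_of_int n)"

definition loc_rep_g :: "int \<Rightarrow> int \<Rightarrow> int \<Rightarrow> int \<Rightarrow> int \<Rightarrow> int \<Rightarrow> int \<Rightarrow> int \<Rightarrow> bool" where
  "loc_rep_g a1 a2 a3 c al1 al2 al3 n \<longleftrightarrow>
     (\<forall>p. prime p \<longrightarrow> rep_Zp_g p a1 a2 a3 c al1 al2 al3 n) \<and> rep_R_g a1 a2 a3 c al1 al2 al3 n"

definition min_g :: "int \<Rightarrow> int \<Rightarrow> int \<Rightarrow> int \<Rightarrow> int \<Rightarrow> int \<Rightarrow> int \<Rightarrow> int" where
  "min_g a1 a2 a3 c al1 al2 al3 =
     Inf {gpol a1 a2 a3 c al1 al2 al3 x1 x2 x3 | x1 x2 x3 :: int. True}"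

definition tight_regular_g :: "int \<Rightarrow> int \<Rightarrow> int \<Rightarrow> int \<Rightarrow> int \<Rightarrow> int \<Rightarrow> int \<Rightarrow> bool" where
  "tight_regular_g a1 a2 a3 c al1 al2 al3 \<longleftrightarrow>
     (\<forall>n. loc_rep_g a1 a2 a3 c al1 al2 al3 n \<and> n \<ge> min_g a1 a2 a3 c al1 al2 al3
          \<longrightarrow> rep_Z_g a1 a2 a3 c al1 al2 al3 n)"

definition lat_B :: "int \<Rightarrow> int \<Rightarrow> int \<Rightarrow> zp3 \<Rightarrow> zp3 \<Rightarrow> zp" where
  "lat_B a1 a2 a3 v w = (case v of (x1, x2, x3) \<Rightarrow> case w of (y1, y2, y3) \<Rightarrow>
     (\<lambda>k. a1 * x1 k * y1 k + a2 * x2 k * y2 k + a3 * x3 k * y3 k))"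

definition det3 :: "zp3 \<Rightarrow> zp3 \<Rightarrow> zp3 \<Rightarrow> zp" where
  "det3 u v w = (case u of (u1, u2, u3) \<Rightarrow> case v of (v1, v2, v3) \<Rightarrow> case w of (w1, w2, w3) \<Rightarrow>
     (\<lambda>k. u1 k * (v2 k * w3 k - v3 k * w2 k) - u2 k * (v1 k * w3 k - v3 k * w1 k)
          + u3 k * (v1 k * w2 k - v2 k * w1 k)))"

definition lat_rep_Zp :: "int \<Rightarrow> int \<Rightarrow> int \<Rightarrow> int \<Rightarrow> int \<Rightarrow> bool" where
  "lat_rep_Zp p a1 a2 a3 n \<longleftrightarrow>
     (\<exists>v. zp3_mem p v \<and> zp_eq p (lat_B a1 a2 a3 v v) (\<lambda>_. n))"

text \<open>The binary lattice <b1,b2> is represented by <a1,a2,a3> tensor Z_p: there is an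
  isometric Z_p-linear map, i.e. images v, w of the basis with the right Gram matrix
  (the Gram matrix diag(b1,b2) is nondegenerate, so the map is injective).\<close>
definition lat_rep_bin_Zp :: "int \<Rightarrow> int \<Rightarrow> int \<Rightarrow> int \<Rightarrow> int \<Rightarrow> int \<Rightarrow> bool" where
  "lat_rep_bin_Zp p a1 a2 a3 b1 b2 \<longleftrightarrow>
     (\<exists>v w. zp3_mem p v \<and> zp3_mem p w \<and>
        zp_eq p (lat_B a1 a2 a3 v v) (\<lambda>_. b1) \<and>
        zp_eq p (lat_B a1 a2 a3 w w) (\<lambda>_. b2) \<and>
        zp_eq p (lat_B a1 a2 a3 v w) (\<lambda>_. 0))"

text \<open><a1,a2,a3> tensor Z_p is isometric to <1,-Delta> perp <p eps>: it has a Z_p-basis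
  (determinant of the change of basis a unit) with Gram matrix diag(1, -Delta, p eps).\<close>
definition lat_iso_Zp :: "int \<Rightarrow> int \<Rightarrow> int \<Rightarrow> int \<Rightarrow> zp \<Rightarrow> zp \<Rightarrow> zp \<Rightarrow> bool" where
  "lat_iso_Zp p a1 a2 a3 d1 d2 d3 \<longleftrightarrow>
     (\<exists>u v w. zp3_mem p u \<and> zp3_mem p v \<and> zp3_mem p w \<and> zp_unit p (det3 u v w) \<and>
        zp_eq p (lat_B a1 a2 a3 u u) d1 \<and> zp_eq p (lat_B a1 a2 a3 v v) d2 \<and>
        zp_eq p (lat_B a1 a2 a3 w w) d3 \<and>
        zp_eq p (lat_B a1 a2 a3 u v) (\<lambda>_. 0) \<and> zp_eq p (lat_B a1 a2 a3 u w) (\<lambda>_. 0) \<and>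
        zp_eq p (lat_B a1 a2 a3 v w) (\<lambda>_. 0))"

definition lat_unimodular_Zp :: "int \<Rightarrow> int \<Rightarrow> int \<Rightarrow> int \<Rightarrow> bool" where
  "lat_unimodular_Zp p a1 a2 a3 \<longleftrightarrow> zp_unit p (\<lambda>_. a1 * a2 * a3)"

definition p_stable :: "int \<Rightarrow> int \<Rightarrow> int \<Rightarrow> int \<Rightarrow> bool" where
  "p_stable p a1 a2 a3 \<longleftrightarrow>
     (if p = 2 then
        lat_unimodular_Zp 2 a1 a2 a3 \<or> lat_rep_bin_Zp 2 a1 a2 a3 1 3 \<or> lat_rep_bin_Zp 2 a1 a2 a3 1 7
      else
        lat_rep_bin_Zp p a1 a2 a3 1 (-1) \<or>
        (\<exists>Delta eps. zp_unit p Delta \<and> \<not> zp_square p Delta \<and> zp_unit p eps \<and>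
           lat_iso_Zp p a1 a2 a3 (\<lambda>_. 1) (\<lambda>k. - Delta k) (\<lambda>k. p * eps k)))"

end

theory Submission imports Defs begin

lemma hensel_inj:
  fixes p A B y z :: int
  assumes "prime p" "p dvd A" "coprime B p"
    and "[A * y^2 + B * y = A * z^2 + B * z] (mod p^k)"
  shows "[y = z] (mod p^k)"
proof -
  have e: "A * y^2 + B * y - (A * z^2 + B * z) = (y - z) * (A * (y + z) + B)"
    by (simp add: algebra_simps power2_eq_square)
  have "[A * (y + z) + B = B] (mod p)"
    using assms(2) by (simp add: cong_iff_dvd_diff)
  hence "coprime (A * (y + z) + B) p"
    using assms(3) by (metis cong_imp_coprime cong_sym)
  hence cp: "coprime (A * (y + z) + B) (p^k)" by simp
  have "p^k dvd (y - z) * (A * (y + z) + B)"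
    using assms(4) e by (simp add: cong_iff_dvd_diff)
  hence "p^k dvd (y - z)" using cp
    by (metis coprime_commute coprime_dvd_mult_left_iff)
  thus ?thesis by (simp add: cong_iff_dvd_diff)
qed

lemma hensel_ex:
  fixes p A B N :: int
  assumes "prime p" "p dvd A" "coprime B p"
  shows "\<exists>y. [A * y^2 + B * y = N] (mod p^k)"
proof -
  define M where "M = p^k"
  have M0: "M > 0" using assms(1) prime_gt_0_int M_def by simp
  define S where "S = {0..<M}"
  define h where "h = (\<lambda>y. (A * y^2 + B * y) mod M)"
  have "h ` S \<subseteq> S" using M0 by (auto simp: h_def S_def)
  moreover have "inj_on h S"
  proof
    fix y z assume "y \<in> S" "z \<in> S" "h y = h z"
    hence "[A * y^2 + B * y = A * z^2 + B * z] (mod p^k)"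
      by (simp add: h_def M_def cong_def)
    hence "[y = z] (mod M)" using hensel_inj assms M_def by blast
    thus "y = z" using \<open>y \<in> S\<close> \<open>z \<in> S\<close> by (simp add: S_def cong_def)
  qed
  ultimately have "h ` S = S" by (intro endo_inj_surj) (auto simp: S_def)
  moreover have "N mod M \<in> S" using M0 by (simp add: S_def)
  ultimately obtain y where "h y = N mod M" by (metis imageE)
  thus ?thesis by (auto simp: h_def M_def cong_def)
qed

lemma hensel:
  fixes p A B N :: int
  assumes "prime p" "p dvd A" "coprime B p"
  shows "\<exists>y. zp_mem p y \<and> (\<forall>k. [A * y k ^2 + B * y k = N] (mod p^k))"
proof -
  define y where "y = (\<lambda>k. SOME y. [A * y^2 + B * y = N] (mod p^k))"
  have Y: "[A * y k ^2 + B * y k = N] (mod p^k)" for k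
    unfolding y_def by (rule someI_ex, rule hensel_ex[OF assms])
  have "zp_mem p y" unfolding zp_mem_def
  proof
    fix k
    have "[A * y (Suc k) ^2 + B * y (Suc k) = N] (mod p^k)"
      using Y[of "Suc k"] by (rule cong_dvd_modulus) (simp add: le_imp_power_dvd)
    hence "[A * y (Suc k) ^2 + B * y (Suc k) = A * y k ^2 + B * y k] (mod p^k)"
      using Y[of k] by (metis cong_sym cong_trans)
    thus "[y (Suc k) = y k] (mod p^k)" using hensel_inj assms by blast
  qed
  thus ?thesis using Y by blast
qed

lemma gpol_cong:
  fixes M :: int
  assumes "[c * x1 + al1 = y1] (mod M)" "[c * x2 + al2 = y2] (mod M)" "[c * x3 + al3 = y3] (mod M)"
  shows "[gpol a1 a2 a3 c al1 al2 al3 x1 x2 x3 = a1 * y1^2 + a2 * y2^2 + a3 * y3^2] (mod M)"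
  unfolding gpol_def using assms by (simp add: cong_add cong_mult cong_pow)

lemma part2_gen:
  fixes p A B n a c al t K :: int
  assumes "zp_mem p y" "\<forall>k. [A * y k ^2 + B * y k = n] (mod p^k)"
    and "\<And>z. a * (c * (t * z) + al)^2 = K * (A * z^2 + B * z) + a * al^2"
  shows "\<exists>x. zp_mem p x \<and> (\<forall>k. [a * (c * x k + al)^2 = a * al^2 + K * n] (mod p^k))"
proof (intro exI conjI allI)
  show "zp_mem p (\<lambda>k. t * y k)" using assms(1) unfolding zp_mem_def
    by (simp add: cong_scalar_left)
  fix k
  have "[K * (A * y k ^2 + B * y k) + a * al^2 = K * n + a * al^2] (mod p^k)"
    using assms(2) by (simp add: cong_add cong_scalar_left)
  thus "[a * (c * (t * y k) + al)^2 = a * al^2 + K * n] (mod p^k)"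
    unfolding assms(3) by (metis add.commute)
qed

lemma part2:
  fixes p m a al n :: int
  assumes "prime p" "p dvd cpar m" "\<not> p dvd a" "coprime al p"
  shows "\<exists>x. zp_mem p x \<and>
    (\<forall>k. [a * (cpar m * x k + al)^2 = a * al^2 + delta m * cpar m * n] (mod p^k))"
proof -
  define c where "c = cpar m"
  define D where "D = delta m"
  have ca: "coprime a p" using prime_imp_coprime[OF assms(1,3)] by (simp add: coprime_commute)
  show ?thesis
  proof (cases "p = 2")
    case False
    have nd: "\<not> p dvd 2"
    proof
      assume "p dvd 2"
      hence "p \<le> 2" by (simp add: zdvd_imp_le)
      with prime_ge_2_int[OF assms(1)] False show False by simp
    qed
    have c2: "coprime 2 p" using prime_imp_coprime[OF assms(1) nd] by (simp add: coprime_commute)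
    have cB: "coprime (2 * a * al) p" using c2 ca assms(4) by simp
    obtain y where y: "zp_mem p y" "\<forall>k. [(a*c*D) * y k ^2 + (2*a*al) * y k = n] (mod p^k)"
      using hensel[OF assms(1) _ cB, of "a*c*D" n] assms(2) c_def by auto
    have "\<exists>x. zp_mem p x \<and> (\<forall>k. [a * (c * x k + al)^2 = a * al^2 + (c*D) * n] (mod p^k))"
      by (rule part2_gen[OF y, where t = D]) (simp add: algebra_simps power2_eq_square)
    thus ?thesis by (simp add: c_def D_def mult.commute)
  next
    case True
    have aodd: "odd a" using assms(3) True by simp
    have alodd: "odd al" using assms(4) True by (simp add: coprime_commute)
    have cB: "coprime (a * al) p" using True aodd alodd by simp
    show ?thesis
    proof (cases "odd m")
      case True
      hence "odd m" .
      hence D4: "D = 4" by (simp add: D_def delta_def)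
      hence cD: "c = 2 * (m - 2)" "D = 4" by (simp_all add: c_def D_def cpar_def)
      obtain y where y: "zp_mem p y" "\<forall>k. [(a*c) * y k ^2 + (a*al) * y k = n] (mod p^k)"
        using hensel[OF assms(1) _ cB, of "a*c" n] assms(2) c_def by auto
      have "\<exists>x. zp_mem p x \<and> (\<forall>k. [a * (c * x k + al)^2 = a * al^2 + (D*c) * n] (mod p^k))"
        by (rule part2_gen[OF y, where t = 2]) (simp add: cD algebra_simps power2_eq_square)
      thus ?thesis by (simp add: c_def D_def)
    next
      case oddF: False
      show ?thesis
      proof (cases "m mod 4 = 2")
      case True
      hence h: "m mod 4 = 2" .
      have ev: "\<not> odd m" using h by presburger
      hence D2: "D = 2" using h by (simp add: D_def delta_def)
      hence cD: "c = m - 2" "D = 2" by (simp_all add: c_def D_def cpar_def)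
      define c' where "c' = c div 2"
      have c': "c = 2 * c'" "even c'" using h cD unfolding c'_def by presburger+
      have pA: "p dvd a * c'" using c' \<open>p = 2\<close> by simp
      obtain y where y: "zp_mem p y" "\<forall>k. [(a*c') * y k ^2 + (a*al) * y k = n] (mod p^k)"
        using hensel[OF assms(1) pA cB, of n] by auto
      have "\<exists>x. zp_mem p x \<and> (\<forall>k. [a * (c * x k + al)^2 = a * al^2 + (D*c) * n] (mod p^k))"
        by (rule part2_gen[OF y, where t = 1]) (simp add: cD(2) c' algebra_simps power2_eq_square)
      thus ?thesis by (simp add: c_def D_def)
    next
      case False
      hence h: "m mod 4 = 0" using oddF by presburger
      have ev: "\<not> odd m" "m mod 4 \<noteq> 2" using h by presburger+
      hence "D = 1" by (simp add: D_def delta_def)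
      hence "c = (m - 2) div 2" by (simp add: c_def D_def cpar_def)
      hence "odd c" using h by presburger
      hence False using assms(2) \<open>p = 2\<close> c_def by simp
      thus ?thesis ..
    qed
    qed
  qed
qed

lemma zp_mem_zero: "zp_mem p (\<lambda>_. 0)" by (simp add: zp_mem_def)

lemma rep_one:
  fixes p c a1 a2 a3 al1 al2 al3 N :: int
  assumes "zp_mem p x"
  shows "(\<forall>k. [a1 * (c * x k + al1)^2 = a1 * al1^2 + N] (mod p^k)) \<Longrightarrow>
           rep_Zp_g p a1 a2 a3 c al1 al2 al3 (N + a1 * al1^2 + a2 * al2^2 + a3 * al3^2)"
    and "(\<forall>k. [a2 * (c * x k + al2)^2 = a2 * al2^2 + N] (mod p^k)) \<Longrightarrow>
           rep_Zp_g p a1 a2 a3 c al1 al2 al3 (N + a1 * al1^2 + a2 * al2^2 + a3 * al3^2)"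
    and "(\<forall>k. [a3 * (c * x k + al3)^2 = a3 * al3^2 + N] (mod p^k)) \<Longrightarrow>
           rep_Zp_g p a1 a2 a3 c al1 al2 al3 (N + a1 * al1^2 + a2 * al2^2 + a3 * al3^2)"
proof -
  assume h: "\<forall>k. [a1 * (c * x k + al1)^2 = a1 * al1^2 + N] (mod p^k)"
  have "[gpol a1 a2 a3 c al1 al2 al3 (x k) 0 0 = N + a1 * al1^2 + a2 * al2^2 + a3 * al3^2] (mod p^k)" for k
  proof -
    have "[a1 * (c * x k + al1)^2 + (a2 * al2^2 + a3 * al3^2) = (a1 * al1^2 + N) + (a2 * al2^2 + a3 * al3^2)] (mod p^k)"
      using h by (simp add: cong_add)
    thus ?thesis by (simp add: gpol_def algebra_simps)
  qed
  thus "rep_Zp_g p a1 a2 a3 c al1 al2 al3 (N + a1 * al1^2 + a2 * al2^2 + a3 * al3^2)"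
    unfolding rep_Zp_g_def zp_eq_def using assms zp_mem_zero by blast
next
  assume h: "\<forall>k. [a2 * (c * x k + al2)^2 = a2 * al2^2 + N] (mod p^k)"
  have "[gpol a1 a2 a3 c al1 al2 al3 0 (x k) 0 = N + a1 * al1^2 + a2 * al2^2 + a3 * al3^2] (mod p^k)" for k
  proof -
    have "[a2 * (c * x k + al2)^2 + (a1 * al1^2 + a3 * al3^2) = (a2 * al2^2 + N) + (a1 * al1^2 + a3 * al3^2)] (mod p^k)"
      using h by (simp add: cong_add)
    thus ?thesis by (simp add: gpol_def algebra_simps)
  qed
  thus "rep_Zp_g p a1 a2 a3 c al1 al2 al3 (N + a1 * al1^2 + a2 * al2^2 + a3 * al3^2)"
    unfolding rep_Zp_g_def zp_eq_def using assms zp_mem_zero by blast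
next
  assume h: "\<forall>k. [a3 * (c * x k + al3)^2 = a3 * al3^2 + N] (mod p^k)"
  have "[gpol a1 a2 a3 c al1 al2 al3 0 0 (x k) = N + a1 * al1^2 + a2 * al2^2 + a3 * al3^2] (mod p^k)" for k
  proof -
    have "[a3 * (c * x k + al3)^2 + (a1 * al1^2 + a2 * al2^2) = (a3 * al3^2 + N) + (a1 * al1^2 + a2 * al2^2)] (mod p^k)"
      using h by (simp add: cong_add)
    thus ?thesis by (simp add: gpol_def algebra_simps)
  qed
  thus "rep_Zp_g p a1 a2 a3 c al1 al2 al3 (N + a1 * al1^2 + a2 * al2^2 + a3 * al3^2)"
    unfolding rep_Zp_g_def zp_eq_def using assms zp_mem_zero by blast
qed

lemma part3:
  fixes p c a1 a2 a3 al1 al2 al3 N :: int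
  assumes "prime p" "\<not> p dvd c"
  shows "rep_Zp_g p a1 a2 a3 c al1 al2 al3 N \<longleftrightarrow> lat_rep_Zp p a1 a2 a3 N"
proof
  assume "rep_Zp_g p a1 a2 a3 c al1 al2 al3 N"
  then obtain x1 x2 x3 where x: "zp_mem p x1" "zp_mem p x2" "zp_mem p x3"
    and e: "zp_eq p (\<lambda>k. gpol a1 a2 a3 c al1 al2 al3 (x1 k) (x2 k) (x3 k)) (\<lambda>_. N)"
    unfolding rep_Zp_g_def by blast
  define v where "v = ((\<lambda>k. c * x1 k + al1), (\<lambda>k. c * x2 k + al2), (\<lambda>k. c * x3 k + al3))"
  have "zp3_mem p v" using x unfolding v_def zp3_mem_def zp_mem_def
    by (simp add: cong_add cong_scalar_left)
  moreover have "zp_eq p (lat_B a1 a2 a3 v v) (\<lambda>_. N)"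
    using e unfolding v_def lat_B_def zp_eq_def by (simp add: gpol_def power2_eq_square mult.assoc)
  ultimately show "lat_rep_Zp p a1 a2 a3 N" unfolding lat_rep_Zp_def by blast
next
  assume "lat_rep_Zp p a1 a2 a3 N"
  then obtain y1 y2 y3 where y: "zp_mem p y1" "zp_mem p y2" "zp_mem p y3"
    and e: "zp_eq p (lat_B a1 a2 a3 (y1, y2, y3) (y1, y2, y3)) (\<lambda>_. N)"
    unfolding lat_rep_Zp_def zp3_mem_def by auto
  have cc: "coprime c p" using prime_imp_coprime[OF assms] by (simp add: coprime_commute)
  obtain u where u: "zp_mem p u" "\<forall>k. [0 * u k ^2 + c * u k = 1] (mod p^k)"
    using hensel[OF assms(1) _ cc, of 0 1] by auto
  have u': "[c * u k = 1] (mod p^k)" for k using u(2) by simp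
  define x1 where "x1 = (\<lambda>k. (y1 k - al1) * u k)"
  define x2 where "x2 = (\<lambda>k. (y2 k - al2) * u k)"
  define x3 where "x3 = (\<lambda>k. (y3 k - al3) * u k)"
  have xm: "zp_mem p (\<lambda>k. (y k - al) * u k)" if "zp_mem p y" for y al
    using that u(1) unfolding zp_mem_def by (simp add: cong_mult cong_diff)
  have xc: "[c * ((y k - al) * u k) + al = y k] (mod p^k)" for y al k
  proof -
    have "[(c * u k) * (y k - al) + al = 1 * (y k - al) + al] (mod p^k)"
      using u'[of k] by (intro cong_add cong_mult cong_refl)
    thus ?thesis by (simp add: algebra_simps)
  qed
  have "[gpol a1 a2 a3 c al1 al2 al3 (x1 k) (x2 k) (x3 k) = N] (mod p^k)" for k
  proof -
    have "[gpol a1 a2 a3 c al1 al2 al3 (x1 k) (x2 k) (x3 k) = a1 * y1 k^2 + a2 * y2 k^2 + a3 * y3 k^2] (mod p^k)"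
      unfolding x1_def x2_def x3_def by (rule gpol_cong; rule xc)
    moreover have "[a1 * y1 k^2 + a2 * y2 k^2 + a3 * y3 k^2 = N] (mod p^k)"
      using e unfolding zp_eq_def lat_B_def by (simp add: power2_eq_square mult.assoc)
    ultimately show ?thesis by (rule cong_trans)
  qed
  thus "rep_Zp_g p a1 a2 a3 c al1 al2 al3 N"
    unfolding rep_Zp_g_def zp_eq_def x1_def x2_def x3_def using xm y by blast
qed

lemma sq_bound:
  fixes c x al :: int
  assumes "0 < al" "2 * al < c"
  shows "al^2 \<le> (c * x + al)^2"
proof -
  have "al \<le> \<bar>c * x + al\<bar>"
  proof (cases "x = 0")
    case True thus ?thesis by simp
  next
    case False
    show ?thesis
    proof (cases "x > 0")
      case True
      hence "c * 1 \<le> c * x" using assms by (intro mult_left_mono) auto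
      thus ?thesis using assms by simp
    next
      case False
      hence "x \<le> -1" using \<open>x \<noteq> 0\<close> by simp
      hence "c * x \<le> c * (-1)" using assms by (intro mult_left_mono) auto
      thus ?thesis using assms by simp
    qed
  qed
  hence "\<bar>al\<bar> \<le> \<bar>c * x + al\<bar>" using assms by simp
  thus ?thesis by (simp only: abs_le_square_iff)
qed

theorem lemma3p4:
  fixes m a1 a2 a3 al1 al2 al3 :: int
  defines "c \<equiv> cpar m"
  assumes "m \<ge> 4"
    and "tight_regular_g a1 a2 a3 c al1 al2 al3"
    and "0 < a1" and "a1 \<le> a2" and "a2 \<le> a3"
    and "gcd a1 (gcd a2 a3) = 1"
    and "\<forall>p. prime p \<and> \<not> p dvd c \<longrightarrow> p_stable p a1 a2 a3"
    and "0 < al1" and "2 * al1 < c"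
    and "0 < al2" and "2 * al2 < c"
    and "0 < al3" and "2 * al3 < c"
    and "gcd c (al1 * al2 * al3) = 1"
  shows "min_g a1 a2 a3 c al1 al2 al3 = a1 * al1^2 + a2 * al2^2 + a3 * al3^2
    \<and> (\<forall>p n. prime p \<and> p dvd c \<and> n \<ge> 0 \<longrightarrow>
          rep_Zp_g p a1 a2 a3 c al1 al2 al3 (delta m * c * n + a1 * al1^2 + a2 * al2^2 + a3 * al3^2))
    \<and> (\<forall>p n. prime p \<and> \<not> p dvd c \<and> n \<ge> 0 \<longrightarrow>
          (rep_Zp_g p a1 a2 a3 c al1 al2 al3 (delta m * c * n + a1 * al1^2 + a2 * al2^2 + a3 * al3^2)
           \<longleftrightarrow> lat_rep_Zp p a1 a2 a3 (delta m * c * n + a1 * al1^2 + a2 * al2^2 + a3 * al3^2)))"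
proof (intro conjI allI impI)
  show "min_g a1 a2 a3 c al1 al2 al3 = a1 * al1^2 + a2 * al2^2 + a3 * al3^2"
    unfolding min_g_def
  proof (rule cInf_eq_minimum)
    have "gpol a1 a2 a3 c al1 al2 al3 (0::int) 0 0 = a1 * al1^2 + a2 * al2^2 + a3 * al3^2"
      by (simp add: gpol_def)
    thus "a1 * al1^2 + a2 * al2^2 + a3 * al3^2
      \<in> {gpol a1 a2 a3 c al1 al2 al3 x1 x2 x3 |x1 x2 x3 :: int. True}"
      unfolding mem_Collect_eq by (intro exI[where x="0::int"]) simp
  next
    fix v assume "v \<in> {gpol a1 a2 a3 c al1 al2 al3 x1 x2 x3 |x1 x2 x3 :: int. True}"
    then obtain x1 x2 x3 :: int where v: "v = gpol a1 a2 a3 c al1 al2 al3 x1 x2 x3" by blast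
    have "a1 * al1^2 \<le> a1 * (c * x1 + al1)^2"
      using assms sq_bound by (intro mult_left_mono) auto
    moreover have "a2 * al2^2 \<le> a2 * (c * x2 + al2)^2"
      using assms sq_bound by (intro mult_left_mono) auto
    moreover have "a3 * al3^2 \<le> a3 * (c * x3 + al3)^2"
      using assms sq_bound by (intro mult_left_mono) auto
    ultimately show "a1 * al1^2 + a2 * al2^2 + a3 * al3^2 \<le> v"
      unfolding v gpol_def by simp
  qed
next
  fix p n :: int
  assume h: "prime p \<and> p dvd c \<and> n \<ge> 0"
  hence pp: "prime p" and pc: "p dvd c" by auto
  have na: "\<not> (p dvd a1 \<and> p dvd a2 \<and> p dvd a3)"
  proof
    assume "p dvd a1 \<and> p dvd a2 \<and> p dvd a3"
    hence "p dvd gcd a1 (gcd a2 a3)" by simp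
    hence "p dvd 1" using assms by simp
    thus False using pp not_prime_unit by blast
  qed
  have nal: "\<not> p dvd al" if "al dvd al1 * al2 * al3" for al
  proof
    assume "p dvd al"
    hence "p dvd al1 * al2 * al3" using that dvd_trans by blast
    hence "p dvd gcd c (al1 * al2 * al3)" using pc by simp
    hence "p dvd 1" using \<open>gcd c (al1 * al2 * al3) = 1\<close> by metis
    thus False using pp not_prime_unit by blast
  qed
  have cal: "coprime al1 p" "coprime al2 p" "coprime al3 p"
    using prime_imp_coprime[OF pp nal] by (auto simp: coprime_commute)
  show "rep_Zp_g p a1 a2 a3 c al1 al2 al3 (delta m * c * n + a1 * al1^2 + a2 * al2^2 + a3 * al3^2)"
  proof (cases "p dvd a1")
    case False
    obtain x where x: "zp_mem p x" "\<forall>k. [a1 * (c * x k + al1)^2 = a1 * al1^2 + delta m * c * n] (mod p^k)"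
      using part2[OF pp _ False cal(1), of m n] pc c_def by auto
    show ?thesis by (rule rep_one(1)[OF x])
  next
    case True
    show ?thesis
    proof (cases "p dvd a2")
      case False
      obtain x where x: "zp_mem p x" "\<forall>k. [a2 * (c * x k + al2)^2 = a2 * al2^2 + delta m * c * n] (mod p^k)"
        using part2[OF pp _ False cal(2), of m n] pc c_def by auto
      show ?thesis by (rule rep_one(2)[OF x])
    next
      case True
      hence False: "\<not> p dvd a3" using na \<open>p dvd a1\<close> by blast
      obtain x where x: "zp_mem p x" "\<forall>k. [a3 * (c * x k + al3)^2 = a3 * al3^2 + delta m * c * n] (mod p^k)"
        using part2[OF pp _ False cal(3), of m n] pc c_def by auto
      show ?thesis by (rule rep_one(3)[OF x])
    qed
  qed
next
  fix p n :: int
  assume "prime p \<and> \<not> p dvd c \<and> n \<ge> 0"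
  thus "rep_Zp_g p a1 a2 a3 c al1 al2 al3 (delta m * c * n + a1 * al1^2 + a2 * al2^2 + a3 * al3^2)
           \<longleftrightarrow> lat_rep_Zp p a1 a2 a3 (delta m * c * n + a1 * al1^2 + a2 * al2^2 + a3 * al3^2)"
    using part3 by blast
qed

end
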